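(* Let $\Sigma$ be a finite graph and $f$ an integer-valued function on its vertices. Then there exists a finite graph $\Gamma$ containing $\Sigma$ as an induced subgraph (a motif) such that $1$ is an eigenvalue of the normalized Laplacian of $\Gamma$, with an eigenfunction coinciding with $f$ on the vertices of $\Sigma$.
   Context: For a finite simple graph without isolated vertices, write $i\sim j$ for adjacency and $n_i$ for the degree of $i$. The normalized Laplacian acts on real functions $v$ on the vertices by $\Delta v(i)=v(i)-\frac{1}{n_i}\sum_{j\sim i}v(j)$; $\lambda$ is an eigenvalue with eigenfunction $u$ if $u\not\equiv 0$ and $\frac{1}{n_i}\sum_{j\sim i}u(j)=(1-\lambda)u(i)$ for all $i$. For $\lambda=1$ this says $\sum_{j\sim i}u(j)=0$ for every vertex $i$. *)

theory Defs
  imports Main "HOL-Analysis.Analysis"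
begin

definition simple_graph :: "'v set \<Rightarrow> ('v \<Rightarrow> 'v \<Rightarrow> bool) \<Rightarrow> bool" where
  "simple_graph V E \<longleftrightarrow> finite V \<and> (\<forall>x y. E x y \<longrightarrow> x \<in> V \<and> y \<in> V)
     \<and> (\<forall>x y. E x y \<longrightarrow> E y x) \<and> (\<forall>x. \<not> E x x)"

definition no_isolated_vertices :: "'v set \<Rightarrow> ('v \<Rightarrow> 'v \<Rightarrow> bool) \<Rightarrow> bool" where
  "no_isolated_vertices V E \<longleftrightarrow> (\<forall>i\<in>V. \<exists>j\<in>V. E i j)"

definition nbrs :: "'v set \<Rightarrow> ('v \<Rightarrow> 'v \<Rightarrow> bool) \<Rightarrow> 'v \<Rightarrow> 'v set" where
  "nbrs V E i = {j \<in> V. E i j}"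

definition degree :: "'v set \<Rightarrow> ('v \<Rightarrow> 'v \<Rightarrow> bool) \<Rightarrow> 'v \<Rightarrow> nat" where
  "degree V E i = card (nbrs V E i)"

definition norm_laplacian :: "'v set \<Rightarrow> ('v \<Rightarrow> 'v \<Rightarrow> bool) \<Rightarrow> ('v \<Rightarrow> real) \<Rightarrow> 'v \<Rightarrow> real" where
  "norm_laplacian V E v i = v i - (1 / real (degree V E i)) * (\<Sum>j\<in>nbrs V E i. v j)"

definition is_eigenfunction :: "'v set \<Rightarrow> ('v \<Rightarrow> 'v \<Rightarrow> bool) \<Rightarrow> real \<Rightarrow> ('v \<Rightarrow> real) \<Rightarrow> bool" where
  "is_eigenfunction V E lam u \<longleftrightarrow> (\<exists>i\<in>V. u i \<noteq> 0) \<and> (\<forall>i\<in>V. norm_laplacian V E u i = lam * u i)"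

definition induced_embedding :: "'a set \<Rightarrow> ('a \<Rightarrow> 'a \<Rightarrow> bool) \<Rightarrow> 'b set \<Rightarrow> ('b \<Rightarrow> 'b \<Rightarrow> bool) \<Rightarrow> ('a \<Rightarrow> 'b) \<Rightarrow> bool" where
  "induced_embedding V E W F \<phi> \<longleftrightarrow> inj_on \<phi> V \<and> \<phi> ` V \<subseteq> W \<and>
     (\<forall>x\<in>V. \<forall>y\<in>V. F (\<phi> x) (\<phi> y) \<longleftrightarrow> E x y)"

end

theory Submission
  imports Defs
begin

datatype 'a vtx = Orig 'a | Gad 'a 'a | Pv 'a | Qv 'a | Rv nat

fun adj :: "'a set \<Rightarrow> ('a \<Rightarrow> 'a \<Rightarrow> bool) \<Rightarrow> 'a vtx \<Rightarrow> 'a vtx \<Rightarrow> bool" where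
  "adj V E (Orig x) (Orig y) = E x y"
| "adj V E (Orig x) (Gad y z) = (E y z \<and> x = y)"
| "adj V E (Gad y z) (Orig x) = (E y z \<and> x = y)"
| "adj V E (Gad x y) (Gad z w) = (E x y \<and> z = y \<and> w = x)"
| "adj V E (Orig x) (Pv y) = (x = y \<and> x \<in> V)"
| "adj V E (Pv y) (Orig x) = (x = y \<and> x \<in> V)"
| "adj V E (Pv x) (Qv y) = (x = y \<and> x \<in> V)"
| "adj V E (Qv y) (Pv x) = (x = y \<and> x \<in> V)"
| "adj V E (Rv i) (Rv j) = ((i=0\<and>j=1) \<or> (i=1\<and>j=0) \<or> (i=1\<and>j=2) \<or> (i=2\<and>j=1))"
| "adj V E _ _ = False"

fun uu :: "('a \<Rightarrow> int) \<Rightarrow> 'a vtx \<Rightarrow> real" where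
  "uu f (Orig x) = f x"
| "uu f (Gad x y) = - f y"
| "uu f (Pv x) = 0"
| "uu f (Qv x) = - f x"
| "uu f (Rv i) = 1 - real i"

definition WW :: "'a set \<Rightarrow> ('a \<Rightarrow> 'a \<Rightarrow> bool) \<Rightarrow> 'a vtx set" where
  "WW V E = Orig ` V \<union> (\<lambda>(x,y). Gad x y) ` {(x,y). E x y} \<union> Pv ` V \<union> Qv ` V \<union> {Rv 0, Rv 1, Rv 2}"

lemma WW_simps[simp]:
  "Orig x \<in> WW V E \<longleftrightarrow> x \<in> V"
  "Gad x y \<in> WW V E \<longleftrightarrow> E x y"
  "Pv x \<in> WW V E \<longleftrightarrow> x \<in> V"
  "Qv x \<in> WW V E \<longleftrightarrow> x \<in> V"
  "Rv k \<in> WW V E \<longleftrightarrow> k \<le> 2"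
  by (auto simp: WW_def image_iff)

lemma eig1:
  assumes "(\<Sum>j\<in>nbrs W F i. u j) = 0"
  shows "norm_laplacian W F u i = 1 * u i"
  using assms by (simp add: norm_laplacian_def)

lemma transport:
  fixes W :: "'b set"
  assumes sg: "simple_graph W F" and ni: "no_isolated_vertices W F"
    and ie: "induced_embedding V E W F \<phi>" and ei: "is_eigenfunction W F 1 u"
    and ag: "\<forall>x\<in>V. u (\<phi> x) = real_of_int (f x)"
  shows "\<exists>(W' :: nat set) F' \<phi>' u'. simple_graph W' F' \<and> no_isolated_vertices W' F' \<and>
           induced_embedding V E W' F' \<phi>' \<and> is_eigenfunction W' F' 1 u' \<and>
           (\<forall>x\<in>V. u' (\<phi>' x) = real_of_int (f x))"
proof -
  have fin: "finite W" using sg by (simp add: simple_graph_def)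
  obtain h :: "'b \<Rightarrow> nat" and n where h: "h ` W = {i. i < n}" "inj_on h W"
    using finite_imp_inj_to_nat_seg[OF fin] by blast
  define F' where "F' i j = (\<exists>a\<in>W. \<exists>b\<in>W. h a = i \<and> h b = j \<and> F a b)" for i j
  define u' where "u' = u \<circ> inv_into W h"
  have Fh: "F' (h a) (h b) = F a b" if "a \<in> W" "b \<in> W" for a b
    using that h(2) unfolding F'_def by (auto dest: inj_onD)
  have uh: "u' (h a) = u a" if "a \<in> W" for a
    using that h(2) by (simp add: u'_def)
  have nb: "nbrs (h ` W) F' (h a) = h ` nbrs W F a" if "a \<in> W" for a
    using that Fh unfolding nbrs_def by auto
  have nbinj: "inj_on h (nbrs W F a)" for a
    using h(2) by (rule inj_on_subset) (auto simp: nbrs_def)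
  have lap: "norm_laplacian (h ` W) F' u' (h a) = norm_laplacian W F u a" if "a \<in> W" for a
  proof -
    have "(\<Sum>j\<in>nbrs (h ` W) F' (h a). u' j) = (\<Sum>j\<in>nbrs W F a. u j)"
      unfolding nb[OF that] using nbinj[of a]
      by (simp add: sum.reindex uh nbrs_def)
    moreover have "degree (h ` W) F' (h a) = degree W F a"
      unfolding degree_def nb[OF that] using nbinj[of a] by (simp add: card_image)
    ultimately show ?thesis using that uh by (simp add: norm_laplacian_def)
  qed
  have phiW: "\<phi> x \<in> W" if "x \<in> V" for x using ie that by (auto simp: induced_embedding_def)
  show ?thesis
  proof (intro exI conjI)
    have sg2: "\<forall>x y. F x y \<longrightarrow> x \<in> W \<and> y \<in> W" "\<forall>x y. F x y \<longrightarrow> F y x" "\<forall>x. \<not> F x x"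
      using sg unfolding simple_graph_def by auto
    show "simple_graph (h ` W) F'"
      unfolding simple_graph_def
    proof (intro conjI allI impI)
      show "finite (h ` W)" using fin by simp
      fix i j assume "F' i j"
      then obtain a b where ab: "a \<in> W" "b \<in> W" "h a = i" "h b = j" "F a b"
        unfolding F'_def by blast
      then show "i \<in> h ` W" "j \<in> h ` W" by auto
      show "F' j i" unfolding F'_def using ab sg2(2) by blast
    next
      fix i show "\<not> F' i i"
      proof
        assume "F' i i"
        then obtain a b where ab: "a \<in> W" "b \<in> W" "h a = i" "h b = i" "F a b"
          unfolding F'_def by blast
        then have "a = b" using h(2) by (metis inj_onD)
        then show False using ab sg2(3) by simp
      qed
    qed
    show "no_isolated_vertices (h ` W) F'"
      using ni Fh unfolding no_isolated_vertices_def by fastforce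
    show "induced_embedding V E (h ` W) F' (h \<circ> \<phi>)"
      using ie Fh phiW h(2) unfolding induced_embedding_def
      by (auto intro!: comp_inj_on inj_on_subset[OF h(2)])
    show "is_eigenfunction (h ` W) F' 1 u'"
      using ei lap uh unfolding is_eigenfunction_def by fastforce
    show "\<forall>x\<in>V. u' ((h \<circ> \<phi>) x) = real_of_int (f x)"
      using ag uh phiW by simp
  qed
qed

theorem theorem7:
  fixes V :: "'a set" and E :: "'a \<Rightarrow> 'a \<Rightarrow> bool" and f :: "'a \<Rightarrow> int"
  assumes "simple_graph V E"
  shows "\<exists>(W :: nat set) F \<phi> u. simple_graph W F \<and> no_isolated_vertices W F \<and>
           induced_embedding V E W F \<phi> \<and> is_eigenfunction W F 1 u \<and>
           (\<forall>x\<in>V. u (\<phi> x) = real_of_int (f x))"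
proof -
  have sg: "finite V" "\<And>x y. E x y \<Longrightarrow> x \<in> V \<and> y \<in> V" "\<And>x y. E x y \<Longrightarrow> E y x" "\<And>x. \<not> E x x"
    using assms by (auto simp: simple_graph_def)
  let ?W = "WW V E" and ?F = "adj V E" and ?u = "uu f"
  have finE: "finite {(x,y). E x y}"
    by (rule finite_subset[of _ "V \<times> V"]) (use sg in auto)
  have finW: "finite ?W" unfolding WW_def using sg(1) finE by auto
  have e1: "\<And>x y. ?F x y \<Longrightarrow> x \<in> ?W \<and> y \<in> ?W"
  proof -
    fix x y assume "?F x y"
    then show "x \<in> ?W \<and> y \<in> ?W"
      using sg by (cases x; cases y) auto
  qed
  have e2: "\<And>x y. ?F x y \<Longrightarrow> ?F y x"
  proof -
    fix x y assume "?F x y"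
    then show "?F y x"
      using sg by (cases x; cases y) auto
  qed
  have e3: "\<And>x. \<not> ?F x x"
  proof -
    fix x show "\<not> ?F x x" using sg by (cases x) auto
  qed
  have simp: "simple_graph ?W ?F"
    unfolding simple_graph_def
  proof (intro conjI)
    show "finite ?W" by (rule finW)
    show "\<forall>x y. ?F x y \<longrightarrow> x \<in> ?W \<and> y \<in> ?W" using e1 by metis
    show "\<forall>x y. ?F x y \<longrightarrow> ?F y x" using e2 by metis
    show "\<forall>x. \<not> ?F x x" using e3 by metis
  qed
  have niso: "no_isolated_vertices ?W ?F"
    unfolding no_isolated_vertices_def
  proof
    fix i assume iW: "i \<in> ?W"
    show "\<exists>j\<in>?W. ?F i j"
    proof (cases i)
      case (Orig x) then show ?thesis using iW
        by (intro bexI[of _ "Pv x"]) auto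
    next
      case (Gad x y) then show ?thesis using iW sg
        by (intro bexI[of _ "Orig x"]) auto
    next
      case (Pv x) then show ?thesis using iW
        by (intro bexI[of _ "Orig x"]) auto
    next
      case (Qv x) then show ?thesis using iW
        by (intro bexI[of _ "Pv x"]) auto
    next
      case (Rv k) then show ?thesis using iW
        by (intro bexI[of _ "Rv (if k = 1 then 0 else 1)"]) auto
    qed
  qed
  have emb: "induced_embedding V E ?W ?F Orig"
    unfolding induced_embedding_def by (auto simp: inj_on_def)
  have sums: "(\<Sum>j\<in>nbrs ?W ?F i. ?u j) = 0" if iW: "i \<in> ?W" for i
  proof (cases i)
    case (Orig x)
    have x: "x \<in> V" using iW Orig by auto
    let ?N = "{y \<in> V. E x y}"
    have eqN: "nbrs ?W ?F i = (Orig ` ?N \<union> Gad x ` ?N) \<union> {Pv x}"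
      using x sg Orig unfolding nbrs_def
      apply (intro set_eqI)
      subgoal for j by (cases j) auto
      done
    have fN: "finite ?N" using sg(1) by simp
    have d1: "(Orig ` ?N \<union> Gad x ` ?N) \<inter> {Pv x} = {}" by auto
    have d2: "Orig ` ?N \<inter> Gad x ` ?N = {}" by auto
    have "(\<Sum>j\<in>nbrs ?W ?F i. ?u j) = (\<Sum>j\<in>Orig ` ?N \<union> Gad x ` ?N. ?u j) + ?u (Pv x)"
      unfolding eqN using fN d1 by (subst sum.union_disjoint) auto
    also have "\<dots> = (\<Sum>j\<in>Orig ` ?N. ?u j) + (\<Sum>j\<in>Gad x ` ?N. ?u j) + ?u (Pv x)"
      using fN d2 by (subst sum.union_disjoint) auto
    also have "\<dots> = 0"
      by (simp add: sum.reindex inj_on_def sum_negf)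
    finally show ?thesis .
  next
    case (Gad x y)
    have xy: "E x y" using iW Gad by auto
    have "nbrs ?W ?F i = {Orig x, Gad y x}"
      using xy sg Gad unfolding nbrs_def
      apply (intro set_eqI)
      subgoal for j by (cases j) auto
      done
    then show ?thesis using Gad by simp
  next
    case (Pv x)
    have x: "x \<in> V" using iW Pv by auto
    have "nbrs ?W ?F i = {Orig x, Qv x}"
      using x sg Pv unfolding nbrs_def
      apply (intro set_eqI)
      subgoal for j by (cases j) auto
      done
    then show ?thesis using Pv by simp
  next
    case (Qv x)
    have x: "x \<in> V" using iW Qv by auto
    have "nbrs ?W ?F i = {Pv x}"
      using x sg Qv unfolding nbrs_def
      apply (intro set_eqI)
      subgoal for j by (cases j) auto
      done
    then show ?thesis using Qv by simp
  next
    case (Rv k)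
    have k: "k = 0 \<or> k = 1 \<or> k = 2" using iW Rv by auto
    have "nbrs ?W ?F i = (if k = 1 then {Rv 0, Rv 2} else {Rv 1})"
      using k Rv unfolding nbrs_def
      apply (intro set_eqI)
      subgoal for j by (cases j) auto
      done
    then show ?thesis using Rv by simp
  qed
  have eig: "is_eigenfunction ?W ?F 1 ?u"
    unfolding is_eigenfunction_def
  proof (intro conjI ballI)
    show "\<exists>i\<in>?W. ?u i \<noteq> 0" by (intro bexI[of _ "Rv 0"]) auto
    fix i assume "i \<in> ?W" then show "norm_laplacian ?W ?F ?u i = 1 * ?u i"
      by (intro eig1 sums)
  qed
  have ag: "\<forall>x\<in>V. ?u (Orig x) = real_of_int (f x)" by simp
  show ?thesis
    by (rule transport[OF simp niso emb eig ag])
qed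

end
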